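(* Let $\mathcal{A}=\{H_i=\{v:\langle\alpha_i,v\rangle=0\}:i=1,\dots,m\}$ be a linear hyperplane arrangement in $\mathbb{R}^n$, $U\in\mathrm{Gr}(k,n)$ with $\dim(U\cap T)=l$, and $I\subseteq[m]$. The following are equivalent: (1) $I$ is a basis of the matroid $\mathfrak{M}_{\mathcal{A}}(U)$; (2) $|I|=k-l$ and $\{\beta_i:i\in I\}$ is linearly independent; (3) $|I|=k-l$ and $\bigcap_{i\in I}H_i\in L_U(\mathcal{A})$.
   Context: $\alpha_i\ne0$, $T=\bigcap_{i=1}^mH_i$, $\beta_i$ is the orthogonal projection of $\alpha_i$ onto $U$, and $\mathfrak{M}_{\mathcal{A}}(U)$ is the matroid on $[m]$ with rank function $\operatorname{rk}(I)=\dim\operatorname{span}\{\beta_i:i\in I\}$. $L(\mathcal{A})$ is the set of intersections of subfamilies of $\mathcal{A}$ (including $\mathbb{R}^n$), $L_j(\mathcal{A})$ those of codimension $j$. For $U$ with $\dim(U\cap T)=l$, $L_U(\mathcal{A}):=\{X\in L_{k-l}(\mathcal{A}): X\oplus(U\cap(U^\perp+T^\perp))=\mathbb{R}^n\}$ (equivalently, those $X\in L_{k-l}(\mathcal{A})$ with $\Delta(U\cap(U^\perp+T^\perp))\notin H(X)$, where $\Delta$ denotes Plücker coordinates and $H(X)=\{x\in\mathbb{R}^{\binom{[n]}{k-l}}:\sum_I(-1)^{(k-l)(k-l+1)/2+\sum_{i\in I}i}\Delta_{[n]\setminus I}(X)x_I=0\}$). *)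

theory Defs
  imports "HOL-Analysis.Analysis"
begin

text \<open>Arrangement in the euclidean space 'a (of dimension n = DIM('a)) given by normal
  vectors alpha i, i in [m] = {1..m}; H_i = {v. alpha i . v = 0}.\<close>

definition hyp :: "(nat \<Rightarrow> 'a::euclidean_space) \<Rightarrow> nat \<Rightarrow> 'a set" where
  "hyp \<alpha> i = {v. \<alpha> i \<bullet> v = 0}"

definition flat :: "(nat \<Rightarrow> 'a::euclidean_space) \<Rightarrow> nat set \<Rightarrow> 'a set" where
  "flat \<alpha> J = (\<Inter>i\<in>J. hyp \<alpha> i)"

definition centre :: "(nat \<Rightarrow> 'a::euclidean_space) \<Rightarrow> nat \<Rightarrow> 'a set" where
  "centre \<alpha> m = flat \<alpha> {1..m}"

definition int_lattice :: "(nat \<Rightarrow> 'a::euclidean_space) \<Rightarrow> nat \<Rightarrow> 'a set set" where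
  "int_lattice \<alpha> m = {flat \<alpha> J | J. J \<subseteq> {1..m}}"

definition int_lattice_codim :: "(nat \<Rightarrow> 'a::euclidean_space) \<Rightarrow> nat \<Rightarrow> nat \<Rightarrow> 'a set set" where
  "int_lattice_codim \<alpha> m j = {X \<in> int_lattice \<alpha> m. DIM('a) - dim X = j}"

definition proj_vec :: "'a::euclidean_space set \<Rightarrow> (nat \<Rightarrow> 'a) \<Rightarrow> nat \<Rightarrow> 'a" where
  "proj_vec U \<alpha> i = closest_point U (\<alpha> i)"

definition mrank :: "'a::euclidean_space set \<Rightarrow> (nat \<Rightarrow> 'a) \<Rightarrow> nat set \<Rightarrow> nat" where
  "mrank U \<alpha> I = dim (span (proj_vec U \<alpha> ` I))"

definition mindep :: "'a::euclidean_space set \<Rightarrow> (nat \<Rightarrow> 'a) \<Rightarrow> nat \<Rightarrow> nat set \<Rightarrow> bool" where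
  "mindep U \<alpha> m I \<longleftrightarrow> I \<subseteq> {1..m} \<and> mrank U \<alpha> I = card I"

definition mbasis :: "'a::euclidean_space set \<Rightarrow> (nat \<Rightarrow> 'a) \<Rightarrow> nat \<Rightarrow> nat set \<Rightarrow> bool" where
  "mbasis U \<alpha> m I \<longleftrightarrow> mindep U \<alpha> m I \<and>
     (\<forall>J. mindep U \<alpha> m J \<and> I \<subseteq> J \<longrightarrow> J = I)"

definition family_indep :: "(nat \<Rightarrow> 'a::real_vector) \<Rightarrow> nat set \<Rightarrow> bool" where
  "family_indep \<beta> I \<longleftrightarrow> inj_on \<beta> I \<and> independent (\<beta> ` I)"

definition direct_sum_whole :: "'a::real_vector set \<Rightarrow> 'a set \<Rightarrow> bool" where
  "direct_sum_whole X W \<longleftrightarrow> X \<inter> W = {0} \<and> {x + w | x w. x \<in> X \<and> w \<in> W} = UNIV"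

definition subspace_sum :: "'a::real_vector set \<Rightarrow> 'a set \<Rightarrow> 'a set" where
  "subspace_sum A B = {a + b | a b. a \<in> A \<and> b \<in> B}"

text \<open>L_U(A), where l = dim (U \<inter> T).\<close>
definition L_U :: "'a::euclidean_space set \<Rightarrow> (nat \<Rightarrow> 'a) \<Rightarrow> nat \<Rightarrow> 'a set set" where
  "L_U U \<alpha> m = {X \<in> int_lattice_codim \<alpha> m (dim U - dim (U \<inter> centre \<alpha> m)).
      direct_sum_whole X (U \<inter> subspace_sum (orthogonal_comp U) (orthogonal_comp (centre \<alpha> m)))}"

end

theory Submission
  imports Defs
begin

lemma proj_in:
  fixes U :: "'a::euclidean_space set"
  assumes "subspace U" shows "closest_point U x \<in> U"
  using assms by (metis closed_subspace closest_point_in_set empty_iff subspace_0)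

lemma proj_orth:
  fixes U :: "'a::euclidean_space set"
  assumes "subspace U" "y \<in> U" shows "(x - closest_point U x) \<bullet> y = 0"
proof -
  let ?p = "closest_point U x"
  have p: "?p \<in> U" using proj_in[OF assms(1)] .
  have cv: "convex U" using assms(1) by (simp add: subspace_imp_convex)
  have cl: "closed U" using assms(1) by (simp add: closed_subspace)
  have "?p + y \<in> U" using p assms by (simp add: subspace_add)
  from closest_point_dot[OF cv cl this, of x] have "(x - ?p) \<bullet> y \<le> 0" by simp
  moreover have "?p - y \<in> U" using p assms by (simp add: subspace_diff)
  from closest_point_dot[OF cv cl this, of x] have "(x - ?p) \<bullet> y \<ge> 0" by simp
  ultimately show ?thesis by linarith
qed

lemma proj_unique:
  fixes U :: "'a::euclidean_space set"
  assumes "subspace U" "p \<in> U" "\<And>y. y \<in> U \<Longrightarrow> (x - p) \<bullet> y = 0"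
  shows "closest_point U x = p"
proof -
  let ?q = "closest_point U x"
  have q: "?q \<in> U" using proj_in[OF assms(1)] .
  have d: "p - ?q \<in> U" using q assms by (simp add: subspace_diff)
  have "(p - ?q) \<bullet> (p - ?q) = (x - ?q) \<bullet> (p - ?q) - (x - p) \<bullet> (p - ?q)"
    by (simp add: algebra_simps)
  also have "\<dots> = 0" using proj_orth[OF assms(1) d] assms(3)[OF d] by simp
  finally show ?thesis by simp
qed

lemma proj_linear:
  fixes U :: "'a::euclidean_space set"
  assumes "subspace U" shows "linear (closest_point U)"
proof (rule linearI)
  fix x y
  show "closest_point U (x + y) = closest_point U x + closest_point U y"
  proof (rule proj_unique[OF assms])
    show "closest_point U x + closest_point U y \<in> U"
      using proj_in[OF assms] assms by (simp add: subspace_add)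
    fix z assume "z \<in> U"
    then show "(x + y - (closest_point U x + closest_point U y)) \<bullet> z = 0"
      using proj_orth[OF assms, of z x] proj_orth[OF assms, of z y]
      by (simp add: algebra_simps inner_diff_left inner_add_left)
  qed
next
  fix c :: real and x
  show "closest_point U (c *\<^sub>R x) = c *\<^sub>R closest_point U x"
  proof (rule proj_unique[OF assms])
    show "c *\<^sub>R closest_point U x \<in> U"
      using proj_in[OF assms] assms by (simp add: subspace_scale)
    fix z assume "z \<in> U"
    then show "(c *\<^sub>R x - c *\<^sub>R closest_point U x) \<bullet> z = 0"
      using proj_orth[OF assms, of z x]
      by (metis inner_scaleR_left mult_zero_right scaleR_diff_right)
  qed
qed

lemma proj_inner:
  fixes U :: "'a::euclidean_space set"
  assumes "subspace U" "y \<in> U" shows "closest_point U x \<bullet> y = x \<bullet> y"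
  using proj_orth[OF assms, of x] by (simp add: inner_diff_left)

lemma dim_card_indep:
  fixes f :: "nat \<Rightarrow> 'a::euclidean_space"
  assumes "finite I" "dim (f ` I) = card I"
  shows "family_indep f I"
proof -
  have "dim (f ` I) \<le> card (f ` I)" using assms(1) by (simp add: dim_le_card')
  moreover have "card (f ` I) \<le> card I" by (rule card_image_le[OF assms(1)])
  ultimately have c: "card (f ` I) = card I" using assms(2) by linarith
  then have "inj_on f I" using assms(1) by (simp add: eq_card_imp_inj_on)
  moreover have "independent (f ` I)"
    using card_eq_dim[of "f ` I" "f ` I"] c assms by (simp add: span_superset)
  ultimately show ?thesis unfolding family_indep_def by simp
qed

lemma indep_dim_card:
  fixes f :: "nat \<Rightarrow> 'a::euclidean_space"
  assumes "family_indep f I"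
  shows "dim (f ` I) = card I"
  using assms unfolding family_indep_def
  by (simp add: dim_eq_card_independent card_image)

lemma flat_eq: "flat \<alpha> J = {v. \<forall>i\<in>J. \<alpha> i \<bullet> v = 0}"
  unfolding flat_def hyp_def by auto

lemma dim_flat:
  fixes \<alpha> :: "nat \<Rightarrow> 'a::euclidean_space"
  shows "dim (flat \<alpha> J) + dim (\<alpha> ` J) = DIM('a)"
proof -
  have e: "{y \<in> UNIV. \<forall>x \<in> span (\<alpha> ` J). orthogonal x y} = flat \<alpha> J"
  proof safe
    fix y assume "\<forall>x \<in> span (\<alpha> ` J). orthogonal x y"
    then show "y \<in> flat \<alpha> J" unfolding flat_eq orthogonal_def
      by (auto simp: span_base)
  next
    fix y x assume "y \<in> flat \<alpha> J" "x \<in> span (\<alpha> ` J)"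
    then have "\<And>z. z \<in> \<alpha> ` J \<Longrightarrow> orthogonal y z"
      unfolding flat_eq orthogonal_def by (auto simp: inner_commute)
    then have "orthogonal y x"
      using orthogonal_to_span[of x "\<alpha> ` J" y] \<open>x \<in> span (\<alpha> ` J)\<close> by blast
    then show "orthogonal x y" by (simp add: orthogonal_commute)
  qed simp
  from dim_subspace_orthogonal_to_vectors[of "span (\<alpha> ` J)" UNIV]
  show ?thesis unfolding e by simp
qed

lemma flat_orth:
  fixes \<alpha> :: "nat \<Rightarrow> 'a::euclidean_space"
  shows "flat \<alpha> J = orthogonal_comp (span (\<alpha> ` J))"
proof safe
  fix y assume "y \<in> orthogonal_comp (span (\<alpha> ` J))"
  then show "y \<in> flat \<alpha> J" unfolding flat_eq orthogonal_def orthogonal_comp_def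
    by (auto simp: span_base)
next
  fix y assume y: "y \<in> flat \<alpha> J"
  show "y \<in> orthogonal_comp (span (\<alpha> ` J))" unfolding orthogonal_comp_def
  proof safe
    fix x assume x: "x \<in> span (\<alpha> ` J)"
    from y have "\<And>z. z \<in> \<alpha> ` J \<Longrightarrow> orthogonal y z"
      unfolding flat_eq orthogonal_def by (auto simp: inner_commute)
    then have "orthogonal y x"
      using orthogonal_to_span[of x "\<alpha> ` J" y] x by blast
    then show "orthogonal x y" by (simp add: orthogonal_commute)
  qed
qed

theorem lemma3p3:
  fixes \<alpha> :: "nat \<Rightarrow> 'a::euclidean_space" and m k l :: nat
    and U :: "'a set" and I :: "nat set"
  assumes "\<forall>i\<in>{1..m}. \<alpha> i \<noteq> 0"
    and "subspace U" and "dim U = k"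
    and "dim (U \<inter> centre \<alpha> m) = l"
    and "I \<subseteq> {1..m}"
  shows "(mbasis U \<alpha> m I \<longleftrightarrow> card I = k - l \<and> family_indep (proj_vec U \<alpha>) I)
       \<and> (card I = k - l \<and> family_indep (proj_vec U \<alpha>) I
            \<longleftrightarrow> card I = k - l \<and> flat \<alpha> I \<in> L_U U \<alpha> m)"
proof -
  let ?P = "closest_point U"
  define \<beta> where "\<beta> = proj_vec U \<alpha>"
  have \<beta>P: "\<And>i. \<beta> i = ?P (\<alpha> i)" by (simp add: \<beta>_def proj_vec_def)
  have img: "\<And>J. \<beta> ` J = ?P ` (\<alpha> ` J)" by (auto simp: \<beta>P)
  have lin: "linear ?P" using proj_linear[OF assms(2)] .
  have \<beta>U: "\<And>i. \<beta> i \<in> U" using proj_in[OF assms(2)] \<beta>P by simp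
  have \<beta>inner: "\<And>i y. y \<in> U \<Longrightarrow> \<beta> i \<bullet> y = \<alpha> i \<bullet> y"
    using proj_inner[OF assms(2)] \<beta>P by simp
  define W where "W = span (\<beta> ` {1..m})"
  have Wsub: "W \<subseteq> U" unfolding W_def using \<beta>U assms(2) by (intro span_minimal) auto
  have subW: "subspace W" by (simp add: W_def subspace_span)
  have centre_eq: "centre \<alpha> m = {v. \<forall>i\<in>{1..m}. \<alpha> i \<bullet> v = 0}"
    by (simp add: centre_def flat_eq)
  have Wchar: "{y \<in> U. \<forall>x\<in>W. orthogonal x y} = U \<inter> centre \<alpha> m"
  proof safe
    fix y assume y: "y \<in> U" "\<forall>x\<in>W. orthogonal x y"
    show "y \<in> centre \<alpha> m" unfolding centre_eq
    proof safe
      fix i assume "i \<in> {1..m}"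
      then have "\<beta> i \<in> W" unfolding W_def by (simp add: span_base)
      then have "\<beta> i \<bullet> y = 0" using y by (simp add: orthogonal_def)
      then show "\<alpha> i \<bullet> y = 0" using \<beta>inner[OF y(1)] by simp
    qed
  next
    fix y x assume y: "y \<in> U" "y \<in> centre \<alpha> m" and x: "x \<in> W"
    have "\<And>z. z \<in> \<beta> ` {1..m} \<Longrightarrow> orthogonal y z"
      using y \<beta>inner unfolding centre_eq orthogonal_def by (auto simp: inner_commute)
    then have "orthogonal y x" using orthogonal_to_span[of x "\<beta> ` {1..m}" y] x
      unfolding W_def by blast
    then show "orthogonal x y" by (simp add: orthogonal_commute)
  qed
  have dimW: "dim W = k - l"
    using dim_subspace_orthogonal_to_vectors[OF subW assms(2) Wsub] Wchar assms(3,4) by simp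
  have cperp: "orthogonal_comp (centre \<alpha> m) = span (\<alpha> ` {1..m})"
    unfolding centre_def flat_orth by (simp add: orthogonal_comp_self subspace_span)
  have hW: "U \<inter> subspace_sum (orthogonal_comp U) (orthogonal_comp (centre \<alpha> m)) = W"
  proof safe
    fix z assume z: "z \<in> U" "z \<in> subspace_sum (orthogonal_comp U) (orthogonal_comp (centre \<alpha> m))"
    then obtain a b where ab: "z = a + b" "a \<in> orthogonal_comp U" "b \<in> span (\<alpha> ` {1..m})"
      unfolding subspace_sum_def cperp by blast
    have "?P b = z"
    proof (rule proj_unique[OF assms(2) z(1)])
      fix y assume "y \<in> U"
      then have "y \<bullet> a = 0" using ab(2) unfolding orthogonal_comp_def orthogonal_def by blast
      then show "(b - z) \<bullet> y = 0" using ab(1) by (simp add: inner_commute inner_diff_left)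
    qed
    moreover have "?P b \<in> span (?P ` (\<alpha> ` {1..m}))"
      using ab(3) span_linear_image[OF lin, of "\<alpha> ` {1..m}"] by blast
    ultimately show "z \<in> W" unfolding W_def img by simp
  next
    fix z assume "z \<in> W" then show "z \<in> U" using Wsub by blast
  next
    fix z assume "z \<in> W"
    then obtain b where b: "b \<in> span (\<alpha> ` {1..m})" "z = ?P b"
      unfolding W_def img span_linear_image[OF lin] by blast
    have "z - b \<in> orthogonal_comp U"
      unfolding orthogonal_comp_def orthogonal_def
      using proj_orth[OF assms(2), of _ b] b(2)
      by (auto simp: inner_commute inner_diff_left inner_diff_right)
    moreover have "z = (z - b) + b" by simp
    ultimately show "z \<in> subspace_sum (orthogonal_comp U) (orthogonal_comp (centre \<alpha> m))"
      unfolding subspace_sum_def cperp using b(1) by blast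
  qed
  have rank_le: "\<And>J. J \<subseteq> {1..m} \<Longrightarrow> dim (\<beta> ` J) \<le> k - l"
  proof -
    fix J assume "J \<subseteq> {1..m}"
    then have "span (\<beta> ` J) \<subseteq> W" unfolding W_def by (intro span_mono) blast
    then have "dim (span (\<beta> ` J)) \<le> dim W" by (rule dim_subset)
    then show "dim (\<beta> ` J) \<le> k - l" using dimW by simp
  qed
  have mind: "\<And>J. mindep U \<alpha> m J \<longleftrightarrow> J \<subseteq> {1..m} \<and> family_indep \<beta> J"
  proof -
    fix J
    show "mindep U \<alpha> m J \<longleftrightarrow> J \<subseteq> {1..m} \<and> family_indep \<beta> J"
    proof (cases "J \<subseteq> {1..m}")
      case True
      then have "finite J" using finite_subset by blast
      then show ?thesis unfolding mindep_def mrank_def \<beta>_def[symmetric]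
        using dim_card_indep[of J \<beta>] indep_dim_card[of \<beta> J] True by auto
    qed (simp add: mindep_def)
  qed
  have finI: "finite I" using assms(5) finite_subset by blast
  have p1: "mbasis U \<alpha> m I \<longleftrightarrow> card I = k - l \<and> family_indep \<beta> I"
  proof
    assume mb: "mbasis U \<alpha> m I"
    then have fi: "family_indep \<beta> I" using mind unfolding mbasis_def by blast
    then have dI: "dim (\<beta> ` I) = card I" by (rule indep_dim_card)
    have le: "card I \<le> k - l" using rank_le[OF assms(5)] dI by simp
    have "card I = k - l"
    proof (rule ccontr)
      assume ne: "card I \<noteq> k - l"
      have "\<exists>j\<in>{1..m}. \<beta> j \<notin> span (\<beta> ` I)"
      proof (rule ccontr)
        assume "\<not> ?thesis"
        then have "\<beta> ` {1..m} \<subseteq> span (\<beta> ` I)" by blast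
        then have "W \<subseteq> span (\<beta> ` I)" unfolding W_def by (simp add: span_minimal subspace_span)
        then have "dim W \<le> dim (span (\<beta> ` I))" by (rule dim_subset)
        then show False using dimW dI le ne by simp
      qed
      then obtain j where j: "j \<in> {1..m}" "\<beta> j \<notin> span (\<beta> ` I)" by blast
      have jI: "j \<notin> I" using j(2) by (auto simp: span_base)
      have "dim (\<beta> ` insert j I) = card (insert j I)"
        using dim_insert[of "\<beta> j" "\<beta> ` I"] j(2) dI jI finI by simp
      then have "family_indep \<beta> (insert j I)"
        using dim_card_indep finI by blast
      then have "mindep U \<alpha> m (insert j I)" using mind j(1) assms(5) by blast
      then have "insert j I = I" using mb unfolding mbasis_def by blast
      then show False using jI by blast
    qed
    then show "card I = k - l \<and> family_indep \<beta> I" using fi by simp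
  next
    assume h: "card I = k - l \<and> family_indep \<beta> I"
    have "mindep U \<alpha> m I" using mind h assms(5) by blast
    moreover have "J = I" if "mindep U \<alpha> m J" "I \<subseteq> J" for J
    proof -
      have J: "J \<subseteq> {1..m}" "family_indep \<beta> J" using mind that(1) by blast+
      have "card J \<le> card I" using rank_le[OF J(1)] indep_dim_card[OF J(2)] h by simp
      moreover have "finite J" using J(1) finite_subset by blast
      ultimately show "J = I" using card_subset_eq[OF _ that(2)] card_mono[OF _ that(2)] by force
    qed
    ultimately show "mbasis U \<alpha> m I" unfolding mbasis_def by blast
  qed
  have subF: "subspace (flat \<alpha> I)" by (simp add: flat_orth subspace_orthogonal_comp)
  have LU: "flat \<alpha> I \<in> L_U U \<alpha> m \<longleftrightarrow>
      DIM('a) - dim (flat \<alpha> I) = k - l \<and> direct_sum_whole (flat \<alpha> I) W"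
  proof -
    have "flat \<alpha> I \<in> int_lattice \<alpha> m" using assms(5) unfolding int_lattice_def by blast
    then show ?thesis unfolding L_U_def int_lattice_codim_def hW assms(3,4) by simp
  qed
  have p2: "family_indep \<beta> I \<longleftrightarrow> flat \<alpha> I \<in> L_U U \<alpha> m" if cI: "card I = k - l"
  proof
    assume fi: "family_indep \<beta> I"
    have dI: "dim (\<beta> ` I) = k - l" using indep_dim_card[OF fi] cI by simp
    have ssub: "span (\<beta> ` I) \<subseteq> W" unfolding W_def using assms(5) by (intro span_mono) blast
    have sp: "span (\<beta> ` I) = W"
      using subspace_dim_equal[OF subspace_span subW ssub] dI dimW by simp
    have "dim (\<alpha> ` I) \<le> card (\<alpha> ` I)" using finI by (simp add: dim_le_card')
    moreover have "card (\<alpha> ` I) \<le> card I" using card_image_le[OF finI] .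
    moreover have "dim (\<beta> ` I) \<le> dim (\<alpha> ` I)" unfolding img by (rule dim_image_le[OF lin])
    ultimately have d\<alpha>: "dim (\<alpha> ` I) = k - l" using dI cI by simp
    have dF: "dim (flat \<alpha> I) + (k - l) = DIM('a)" using dim_flat[of \<alpha> I] d\<alpha> by simp
    have int: "flat \<alpha> I \<inter> W = {0}"
    proof safe
      fix w assume w: "w \<in> flat \<alpha> I" "w \<in> W"
      have wU: "w \<in> U" using w(2) Wsub by blast
      have "\<And>z. z \<in> \<beta> ` I \<Longrightarrow> orthogonal w z"
        using w(1) \<beta>inner[OF wU] unfolding flat_eq orthogonal_def by (auto simp: inner_commute)
      then have "orthogonal w w" using orthogonal_to_span[of w "\<beta> ` I" w] w(2) sp by blast
      then show "w = 0" by (simp add: orthogonal_def)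
    next
      show "0 \<in> flat \<alpha> I" by (simp add: flat_eq)
    next
      show "0 \<in> W" by (simp add: subW subspace_0)
    qed
    have ds: "dim {x + y |x y. x \<in> flat \<alpha> I \<and> y \<in> W} = DIM('a)"
      using dim_sums_Int[OF subF subW] int dimW dF by simp
    have ss: "subspace {x + y |x y. x \<in> flat \<alpha> I \<and> y \<in> W}"
      using subspace_sums[OF subF subW] by (simp add: set_plus_def)
    have "span {x + y |x y. x \<in> flat \<alpha> I \<and> y \<in> W} = UNIV"
      using ds by (simp add: dim_eq_full)
    then have "{x + y |x y. x \<in> flat \<alpha> I \<and> y \<in> W} = UNIV"
      using ss span_eq_iff by (metis (no_types, lifting))
    then have "direct_sum_whole (flat \<alpha> I) W" using int unfolding direct_sum_whole_def by simp
    then show "flat \<alpha> I \<in> L_U U \<alpha> m" using LU dF by simp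
  next
    assume "flat \<alpha> I \<in> L_U U \<alpha> m"
    then have int: "flat \<alpha> I \<inter> W = {0}" using LU unfolding direct_sum_whole_def by blast
    have ssub: "span (\<beta> ` I) \<subseteq> W" unfolding W_def using assms(5) by (intro span_mono) blast
    have "{y \<in> W. \<forall>x\<in>span (\<beta> ` I). orthogonal x y} \<subseteq> {0}"
    proof safe
      fix y assume y: "y \<in> W" "\<forall>x\<in>span (\<beta> ` I). orthogonal x y"
      have yU: "y \<in> U" using y(1) Wsub by blast
      have "y \<in> flat \<alpha> I" unfolding flat_eq
      proof safe
        fix i assume "i \<in> I"
        then have "orthogonal (\<beta> i) y" using y(2) by (simp add: span_base)
        then show "\<alpha> i \<bullet> y = 0" using \<beta>inner[OF yU] by (simp add: orthogonal_def)
      qed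
      then show "y = 0" using int y(1) by blast
    qed
    then have d0: "dim {y \<in> W. \<forall>x\<in>span (\<beta> ` I). orthogonal x y} = 0"
      by (simp only: dim_eq_0)
    have "dim {y \<in> W. \<forall>x\<in>span (\<beta> ` I). orthogonal x y} + dim (span (\<beta> ` I)) = dim W"
      by (rule dim_subspace_orthogonal_to_vectors[OF subspace_span subW ssub])
    then have "dim (\<beta> ` I) = card I"
      using d0 dimW cI dim_span[of "\<beta> ` I"] by linarith
    then show "family_indep \<beta> I" using dim_card_indep finI by blast
  qed
  show ?thesis using p1 p2 unfolding \<beta>_def by blast
qed

end
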